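(* Let $R=\prod_{i=1}^n R_i$ be a finite product of commutative rings. Then $R$ is an avoidance ring if and only if each $R_i$ is an avoidance ring.
   Context: All rings are commutative with $1\neq 0$. An ideal $I$ of a ring $R$ has avoidance if whenever $I_1,\ldots,I_n$ are finitely many ideals of $R$ with $I\subseteq\bigcup_{k=1}^n I_k$, then $I\subseteq I_k$ for some $k$. A ring is an avoidance ring if every ideal of it has avoidance. *)

theory Defs
  imports "HOL-Algebra.Chinese_Remainder"
begin

definition has_avoidance :: "('a, 'b) ring_scheme \<Rightarrow> 'a set \<Rightarrow> bool" where
  "has_avoidance R I \<longleftrightarrow>
     (\<forall>S. finite S \<and> (\<forall>J\<in>S. ideal J R) \<and> I \<subseteq> \<Union>S \<longrightarrow> (\<exists>J\<in>S. I \<subseteq> J))"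

definition avoidance_ring :: "('a, 'b) ring_scheme \<Rightarrow> bool" where
  "avoidance_ring R \<longleftrightarrow> (\<forall>I. ideal I R \<longrightarrow> has_avoidance R I)"

end

theory Submission
  imports Defs
begin

lemma ideal_crit:
  fixes R (structure)
  assumes "ring R" and sub: "I \<subseteq> carrier R" and z: "\<zero> \<in> I"
    and ad: "\<And>a b. a \<in> I \<Longrightarrow> b \<in> I \<Longrightarrow> a \<oplus> b \<in> I"
    and ml: "\<And>a x. a \<in> I \<Longrightarrow> x \<in> carrier R \<Longrightarrow> x \<otimes> a \<in> I"
    and mr: "\<And>a x. a \<in> I \<Longrightarrow> x \<in> carrier R \<Longrightarrow> a \<otimes> x \<in> I"
  shows "ideal I R"
proof -
  interpret ring R by fact
  have inv: "\<ominus> a \<in> I" if "a \<in> I" for a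
  proof -
    have a: "a \<in> carrier R" using that sub by auto
    have "\<ominus> a = (\<ominus> \<one>) \<otimes> a" using a by (simp add: l_minus)
    then show ?thesis using ml[OF that] by simp
  qed
  have "subgroup I (add_monoid R)"
    apply (rule subgroup.intro)
    using sub z ad inv by (auto simp: a_inv_def[symmetric])
  then show ?thesis using idealI[OF \<open>ring R\<close>] ml mr by blast
qed

lemma RDirProd_mult_pair:
  "mult (RDirProd R S) (a, b) (c, d) = (a \<otimes>\<^bsub>R\<^esub> c, b \<otimes>\<^bsub>S\<^esub> d)"
  by (simp add: RDirProd_def DirProd_def monoid.defs)

lemma RDirProd_add_pair:
  "add (RDirProd R S) (a, b) (c, d) = (a \<oplus>\<^bsub>R\<^esub> c, b \<oplus>\<^bsub>S\<^esub> d)"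
  by (simp add: RDirProd_def DirProd_def monoid.defs)

lemma P_mult_Cons:
  assumes "a \<in> carrier R" "b \<in> carrier R" "as \<in> carrier (RDirProd_list Rs)" "bs \<in> carrier (RDirProd_list Rs)"
  shows "(a # as) \<otimes>\<^bsub>RDirProd_list (R # Rs)\<^esub> (b # bs) = (a \<otimes>\<^bsub>R\<^esub> b) # (as \<otimes>\<^bsub>RDirProd_list Rs\<^esub> bs)"
  using ring_hom_mult[OF RDirProd_list_hom1[of R Rs], of "(a, as)" "(b, bs)"] assms
  by (simp add: RDirProd_carrier RDirProd_mult_pair)

lemma P_add_Cons:
  assumes "a \<in> carrier R" "b \<in> carrier R" "as \<in> carrier (RDirProd_list Rs)" "bs \<in> carrier (RDirProd_list Rs)"
  shows "(a # as) \<oplus>\<^bsub>RDirProd_list (R # Rs)\<^esub> (b # bs) = (a \<oplus>\<^bsub>R\<^esub> b) # (as \<oplus>\<^bsub>RDirProd_list Rs\<^esub> bs)"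
  using ring_hom_add[OF RDirProd_list_hom1[of R Rs], of "(a, as)" "(b, bs)"] assms
  by (simp add: RDirProd_carrier RDirProd_add_pair)

lemma P_mult_nth:
  assumes "xs \<in> carrier (RDirProd_list Rs)" "ys \<in> carrier (RDirProd_list Rs)" "i < length Rs"
  shows "(xs \<otimes>\<^bsub>RDirProd_list Rs\<^esub> ys) ! i = (xs ! i) \<otimes>\<^bsub>Rs ! i\<^esub> (ys ! i)"
  using assms
proof (induct Rs arbitrary: xs ys i)
  case Nil then show ?case by simp
next
  case (Cons R Rs)
  from Cons.prems(1) obtain a as where xs: "xs = a # as" "a \<in> carrier R" "as \<in> carrier (RDirProd_list Rs)"
    unfolding RDirProd_list_carrier by auto
  from Cons.prems(2) obtain b bs where ys: "ys = b # bs" "b \<in> carrier R" "bs \<in> carrier (RDirProd_list Rs)"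
    unfolding RDirProd_list_carrier by auto
  show ?case
  proof (cases i)
    case 0 then show ?thesis using xs ys by (simp add: P_mult_Cons)
  next
    case (Suc j) then show ?thesis using xs ys Cons by (simp add: P_mult_Cons)
  qed
qed

lemma P_add_nth:
  assumes "xs \<in> carrier (RDirProd_list Rs)" "ys \<in> carrier (RDirProd_list Rs)" "i < length Rs"
  shows "(xs \<oplus>\<^bsub>RDirProd_list Rs\<^esub> ys) ! i = (xs ! i) \<oplus>\<^bsub>Rs ! i\<^esub> (ys ! i)"
  using assms
proof (induct Rs arbitrary: xs ys i)
  case Nil then show ?case by simp
next
  case (Cons R Rs)
  from Cons.prems(1) obtain a as where xs: "xs = a # as" "a \<in> carrier R" "as \<in> carrier (RDirProd_list Rs)"
    unfolding RDirProd_list_carrier by auto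
  from Cons.prems(2) obtain b bs where ys: "ys = b # bs" "b \<in> carrier R" "bs \<in> carrier (RDirProd_list Rs)"
    unfolding RDirProd_list_carrier by auto
  show ?case
  proof (cases i)
    case 0 then show ?thesis using xs ys by (simp add: P_add_Cons)
  next
    case (Suc j) then show ?thesis using xs ys Cons by (simp add: P_add_Cons)
  qed
qed

lemma foldr_zero_map: "foldr (\<lambda>R tl. (zero R) # tl) Rs [] = map zero Rs"
  by (induct Rs) auto

lemma P_zero_nth:
  assumes "i < length Rs"
  shows "(\<zero>\<^bsub>RDirProd_list Rs\<^esub>) ! i = \<zero>\<^bsub>Rs ! i\<^esub>"
  using assms by (simp add: RDirProd_list_zero foldr_zero_map)

lemma mk_carrier:
  assumes "\<And>i. i < length Rs \<Longrightarrow> f i \<in> carrier (Rs ! i)"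
  shows "map f [0..<length Rs] \<in> carrier (RDirProd_list Rs)"
  by (rule RDirProd_list_carrier_memI) (auto simp: assms)


lemma P_decomp:
  assumes rings: "\<And>i. i < length Rs \<Longrightarrow> ring (Rs ! i)"
    and J: "ideal J (RDirProd_list Rs)" and x: "x \<in> carrier (RDirProd_list Rs)"
    and h: "\<And>i. i < length Rs \<Longrightarrow> \<exists>y\<in>J. y ! i = x ! i"
  shows "x \<in> J"
proof -
  let ?P = "RDirProd_list Rs"
  let ?n = "length Rs"
  interpret P: ring ?P using RDirProd_list_is_ring rings by blast
  have lx: "length x = ?n" using RDirProd_list_carrier_mem(1)[OF x] .
  have xc: "\<And>i. i < ?n \<Longrightarrow> x ! i \<in> carrier (Rs ! i)" using RDirProd_list_carrier_mem(2)[OF x] .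
  define z where "z k = map (\<lambda>i. if i < k then x ! i else \<zero>\<^bsub>Rs ! i\<^esub>) [0..<?n]" for k
  have zc: "z k \<in> carrier ?P" for k
    unfolding z_def by (rule mk_carrier) (auto simp: xc ring.ring_simprules(2)[OF rings])
  have "k \<le> ?n \<Longrightarrow> z k \<in> J" for k
  proof (induct k)
    case 0
    have "z 0 = \<zero>\<^bsub>?P\<^esub>"
      by (rule nth_equalityI) (auto simp: z_def P_zero_nth RDirProd_list_carrier_mem(1)[OF P.zero_closed])
    then show ?case using ideal.Icarr J additive_subgroup.zero_closed[OF ideal.axioms(1)[OF J]] by simp
  next
    case (Suc k)
    then have k: "k < ?n" by simp
    obtain y where y: "y \<in> J" "y ! k = x ! k" using h[OF k] by blast
    have yc: "y \<in> carrier ?P" using y(1) ideal.Icarr[OF J] by blast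
    define e where "e = map (\<lambda>i. if i = k then \<one>\<^bsub>Rs ! i\<^esub> else \<zero>\<^bsub>Rs ! i\<^esub>) [0..<?n]"
    have ec: "e \<in> carrier ?P"
      unfolding e_def by (rule mk_carrier) (auto simp: ring.ring_simprules(2,6)[OF rings])
    have ey: "e \<otimes>\<^bsub>?P\<^esub> y \<in> J" using ideal.I_l_closed[OF J y(1) ec] .
    have eyc: "e \<otimes>\<^bsub>?P\<^esub> y \<in> carrier ?P" using ec yc by simp
    have "z (Suc k) = z k \<oplus>\<^bsub>?P\<^esub> (e \<otimes>\<^bsub>?P\<^esub> y)"
    proof (rule nth_equalityI)
      show "length (z (Suc k)) = length (z k \<oplus>\<^bsub>?P\<^esub> (e \<otimes>\<^bsub>?P\<^esub> y))"
        using RDirProd_list_carrier_mem(1)[OF P.a_closed[OF zc eyc]] by (simp add: z_def)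
    next
      fix i assume "i < length (z (Suc k))"
      then have i: "i < ?n" by (simp add: z_def)
      interpret Ri: ring "Rs ! i" using rings[OF i] .
      have yi: "y ! i \<in> carrier (Rs ! i)" using RDirProd_list_carrier_mem(2)[OF yc i] .
      show "z (Suc k) ! i = (z k \<oplus>\<^bsub>?P\<^esub> (e \<otimes>\<^bsub>?P\<^esub> y)) ! i"
        unfolding P_add_nth[OF zc eyc i] P_mult_nth[OF ec yc i]
        using i yi xc[OF i] y(2) xc[OF k] by (auto simp: z_def e_def less_Suc_eq ring.ring_simprules[OF rings[OF k]])
    qed
    then show ?case using Suc ey additive_subgroup.a_closed[OF ideal.axioms(1)[OF J]] by simp
  qed
  then have "z ?n \<in> J" by simp
  moreover have "z ?n = x" by (rule nth_equalityI) (auto simp: z_def lx)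
  ultimately show ?thesis by simp
qed

lemma P_proj_ideal:
  assumes rings: "\<And>i. i < length Rs \<Longrightarrow> ring (Rs ! i)"
    and J: "ideal J (RDirProd_list Rs)" and i: "i < length Rs"
  shows "ideal ((\<lambda>y. y ! i) ` J) (Rs ! i)"
proof -
  let ?P = "RDirProd_list Rs"
  let ?n = "length Rs"
  interpret P: ring ?P using RDirProd_list_is_ring rings by blast
  interpret Ri: ring "Rs ! i" using rings[OF i] .
  have Jc: "\<And>y. y \<in> J \<Longrightarrow> y \<in> carrier ?P" using ideal.Icarr[OF J] by blast
  have Jadd: "\<And>a b. a \<in> J \<Longrightarrow> b \<in> J \<Longrightarrow> a \<oplus>\<^bsub>?P\<^esub> b \<in> J"
    using additive_subgroup.a_closed[OF ideal.axioms(1)[OF J]] by blast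
  have Jz: "\<zero>\<^bsub>?P\<^esub> \<in> J" using additive_subgroup.zero_closed[OF ideal.axioms(1)[OF J]] .
  define c where "c a = map (\<lambda>j. if j = i then a else \<zero>\<^bsub>Rs ! j\<^esub>) [0..<?n]" for a
  have cc: "a \<in> carrier (Rs ! i) \<Longrightarrow> c a \<in> carrier ?P" for a
    unfolding c_def by (rule mk_carrier) (auto simp: ring.ring_simprules(2)[OF rings])
  have ci: "c a ! i = a" for a using i by (simp add: c_def)
  show ?thesis
  proof (rule ideal_crit)
    show "ring (Rs ! i)" by (rule Ri.ring_axioms)
    show "(\<lambda>y. y ! i) ` J \<subseteq> carrier (Rs ! i)"
      using Jc RDirProd_list_carrier_mem(2) i by blast
    show "\<zero>\<^bsub>Rs ! i\<^esub> \<in> (\<lambda>y. y ! i) ` J"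
      using Jz P_zero_nth[OF i] by force
  next
    fix a b assume "a \<in> (\<lambda>y. y ! i) ` J" "b \<in> (\<lambda>y. y ! i) ` J"
    then obtain y y' where "y \<in> J" "y' \<in> J" "a = y ! i" "b = y' ! i" by blast
    then show "a \<oplus>\<^bsub>Rs ! i\<^esub> b \<in> (\<lambda>y. y ! i) ` J"
      using Jadd P_add_nth[OF Jc Jc i] by (metis image_eqI)
  next
    fix a x assume "a \<in> (\<lambda>y. y ! i) ` J" and x: "x \<in> carrier (Rs ! i)"
    then obtain y where y: "y \<in> J" "a = y ! i" by blast
    have "c x \<otimes>\<^bsub>?P\<^esub> y \<in> J" using ideal.I_l_closed[OF J y(1) cc[OF x]] .
    moreover have "(c x \<otimes>\<^bsub>?P\<^esub> y) ! i = x \<otimes>\<^bsub>Rs ! i\<^esub> a"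
      using P_mult_nth[OF cc[OF x] Jc[OF y(1)] i] ci y by simp
    ultimately show "x \<otimes>\<^bsub>Rs ! i\<^esub> a \<in> (\<lambda>y. y ! i) ` J" by (metis image_eqI)
  next
    fix a x assume "a \<in> (\<lambda>y. y ! i) ` J" and x: "x \<in> carrier (Rs ! i)"
    then obtain y where y: "y \<in> J" "a = y ! i" by blast
    have "y \<otimes>\<^bsub>?P\<^esub> c x \<in> J" using ideal.I_r_closed[OF J y(1) cc[OF x]] .
    moreover have "(y \<otimes>\<^bsub>?P\<^esub> c x) ! i = a \<otimes>\<^bsub>Rs ! i\<^esub> x"
      using P_mult_nth[OF Jc[OF y(1)] cc[OF x] i] ci y by simp
    ultimately show "a \<otimes>\<^bsub>Rs ! i\<^esub> x \<in> (\<lambda>y. y ! i) ` J" by (metis image_eqI)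
  qed
qed

lemma P_lift_ideal:
  assumes rings: "\<And>i. i < length Rs \<Longrightarrow> ring (Rs ! i)"
    and L: "ideal L (Rs ! i)" and i: "i < length Rs"
  shows "ideal {x \<in> carrier (RDirProd_list Rs). x ! i \<in> L} (RDirProd_list Rs)"
proof -
  let ?P = "RDirProd_list Rs"
  interpret P: ring ?P using RDirProd_list_is_ring rings by blast
  interpret Ri: ring "Rs ! i" using rings[OF i] .
  have Lc: "\<And>a. a \<in> L \<Longrightarrow> a \<in> carrier (Rs ! i)" using ideal.Icarr[OF L] by blast
  show ?thesis
  proof (rule ideal_crit)
    show "ring ?P" by (rule P.ring_axioms)
    show "{x \<in> carrier ?P. x ! i \<in> L} \<subseteq> carrier ?P" by blast
    show "\<zero>\<^bsub>?P\<^esub> \<in> {x \<in> carrier ?P. x ! i \<in> L}"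
      using P_zero_nth[OF i] additive_subgroup.zero_closed[OF ideal.axioms(1)[OF L]] by simp
  next
    fix a b assume "a \<in> {x \<in> carrier ?P. x ! i \<in> L}" "b \<in> {x \<in> carrier ?P. x ! i \<in> L}"
    then show "a \<oplus>\<^bsub>?P\<^esub> b \<in> {x \<in> carrier ?P. x ! i \<in> L}"
      using P_add_nth[OF _ _ i] additive_subgroup.a_closed[OF ideal.axioms(1)[OF L]] by simp
  next
    fix a x assume "a \<in> {x \<in> carrier ?P. x ! i \<in> L}" and x: "x \<in> carrier ?P"
    then show "x \<otimes>\<^bsub>?P\<^esub> a \<in> {x \<in> carrier ?P. x ! i \<in> L}"
      using P_mult_nth[OF _ _ i] ideal.I_l_closed[OF L] RDirProd_list_carrier_mem(2)[OF x i] by simp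
  next
    fix a x assume "a \<in> {x \<in> carrier ?P. x ! i \<in> L}" and x: "x \<in> carrier ?P"
    then show "a \<otimes>\<^bsub>?P\<^esub> x \<in> {x \<in> carrier ?P. x ! i \<in> L}"
      using P_mult_nth[OF _ _ i] ideal.I_r_closed[OF L] RDirProd_list_carrier_mem(2)[OF x i] by simp
  qed
qed


lemma dir1:
  assumes rings: "\<And>i. i < length Rs \<Longrightarrow> ring (Rs ! i)"
    and av: "avoidance_ring (RDirProd_list Rs)" and i: "i < length Rs"
  shows "avoidance_ring (Rs ! i)"
  unfolding avoidance_ring_def has_avoidance_def
proof (intro allI impI, elim conjE)
  let ?P = "RDirProd_list Rs"
  let ?n = "length Rs"
  interpret P: ring ?P using RDirProd_list_is_ring rings by blast
  interpret Ri: ring "Rs ! i" using rings[OF i] .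
  fix K T assume K: "ideal K (Rs ! i)" and T: "finite T" "\<forall>J\<in>T. ideal J (Rs ! i)" "K \<subseteq> \<Union> T"
  define lift where "lift L = {x \<in> carrier ?P. x ! i \<in> L}" for L
  have li: "ideal L (Rs ! i) \<Longrightarrow> ideal (lift L) ?P" for L
    unfolding lift_def using P_lift_ideal[OF rings _ i] by blast
  have "has_avoidance ?P (lift K)" using av li[OF K] unfolding avoidance_ring_def by blast
  moreover have "finite (lift ` T)" using T(1) by simp
  moreover have "\<forall>J\<in>lift ` T. ideal J ?P" using T(2) li by blast
  moreover have "lift K \<subseteq> \<Union> (lift ` T)" using T(3) unfolding lift_def by blast
  ultimately have "\<exists>J\<in>lift ` T. lift K \<subseteq> J"
    unfolding has_avoidance_def by (elim allE impE) (intro conjI, assumption+)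
  then obtain L where L: "L \<in> T" "lift K \<subseteq> lift L" by blast
  have "K \<subseteq> L"
  proof
    fix a assume a: "a \<in> K"
    have ac: "a \<in> carrier (Rs ! i)" using a ideal.Icarr[OF K] by blast
    define c where "c = map (\<lambda>j. if j = i then a else \<zero>\<^bsub>Rs ! j\<^esub>) [0..<?n]"
    have cc: "c \<in> carrier ?P"
      unfolding c_def by (rule mk_carrier) (auto simp: ac ring.ring_simprules(2)[OF rings])
    have ci: "c ! i = a" using i by (simp add: c_def)
    have "c \<in> lift K" using cc ci a by (simp add: lift_def)
    then show "a \<in> L" using L(2) ci by (auto simp: lift_def)
  qed
  then show "\<exists>J\<in>T. K \<subseteq> J" using L(1) by blast
qed

lemma dir2:
  assumes rings: "\<And>i. i < length Rs \<Longrightarrow> ring (Rs ! i)"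
    and av: "\<And>i. i < length Rs \<Longrightarrow> avoidance_ring (Rs ! i)"
  shows "avoidance_ring (RDirProd_list Rs)"
  unfolding avoidance_ring_def has_avoidance_def
proof (intro allI impI, elim conjE)
  let ?P = "RDirProd_list Rs"
  let ?n = "length Rs"
  interpret P: ring ?P using RDirProd_list_is_ring rings by blast
  fix I S assume I: "ideal I ?P" and S: "finite S" "\<forall>J\<in>S. ideal J ?P" "I \<subseteq> \<Union> S"
  define pr where "pr i J = (\<lambda>y. y ! i) ` J" for i and J :: "'a list set"
  show "\<exists>J\<in>S. I \<subseteq> J"
  proof (rule ccontr)
    assume nc: "\<not> (\<exists>J\<in>S. I \<subseteq> J)"
    have Ic: "\<And>x. x \<in> I \<Longrightarrow> x \<in> carrier ?P" using ideal.Icarr[OF I] by blast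
    have ex: "\<exists>i. i < ?n \<and> \<not> pr i I \<subseteq> pr i J" if J: "J \<in> S" for J
    proof (rule ccontr)
      assume "\<not> (\<exists>i. i < ?n \<and> \<not> pr i I \<subseteq> pr i J)"
      then have h: "\<And>i. i < ?n \<Longrightarrow> pr i I \<subseteq> pr i J" by blast
      have "I \<subseteq> J"
      proof
        fix x assume x: "x \<in> I"
        show "x \<in> J"
        proof (rule P_decomp[OF rings _ Ic[OF x]])
          show "ideal J ?P" using S(2) J by blast
          fix i assume i: "i < ?n"
          have "x ! i \<in> pr i J" using h[OF i] x unfolding pr_def by blast
          then show "\<exists>y\<in>J. y ! i = x ! i" unfolding pr_def by force
        qed
      qed
      then show False using nc J by blast
    qed
    define ix where "ix J = (SOME i. i < ?n \<and> \<not> pr i I \<subseteq> pr i J)" for J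
    have ixp: "J \<in> S \<Longrightarrow> ix J < ?n \<and> \<not> pr (ix J) I \<subseteq> pr (ix J) J" for J
      unfolding ix_def by (rule someI_ex[OF ex])
    have pick: "\<exists>a. a \<in> pr i I \<and> (\<forall>J\<in>S. ix J = i \<longrightarrow> a \<notin> pr i J)" if i: "i < ?n" for i
    proof (rule ccontr)
      assume "\<nexists>a. a \<in> pr i I \<and> (\<forall>J\<in>S. ix J = i \<longrightarrow> a \<notin> pr i J)"
      then have sub: "pr i I \<subseteq> \<Union> (pr i ` {J \<in> S. ix J = i})" by blast
      have "ideal (pr i I) (Rs ! i)" unfolding pr_def using P_proj_ideal[OF rings I i] .
      then have "has_avoidance (Rs ! i) (pr i I)" using av[OF i] unfolding avoidance_ring_def by blast
      moreover have "finite (pr i ` {J \<in> S. ix J = i})" using S(1) by simp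
      moreover have "\<forall>K\<in>pr i ` {J \<in> S. ix J = i}. ideal K (Rs ! i)"
        using S(2) P_proj_ideal[OF rings _ i] unfolding pr_def by blast
      ultimately have "\<exists>K\<in>pr i ` {J \<in> S. ix J = i}. pr i I \<subseteq> K"
        using sub unfolding has_avoidance_def by (elim allE impE) (intro conjI, assumption+)
      then obtain J where "J \<in> S" "ix J = i" "pr i I \<subseteq> pr i J" by blast
      then show False using ixp by blast
    qed
    have "\<forall>i. \<exists>a. i < ?n \<longrightarrow> a \<in> pr i I \<and> (\<forall>J\<in>S. ix J = i \<longrightarrow> a \<notin> pr i J)"
      using pick by blast
    from choice[OF this] obtain f where f0: "\<forall>i. i < ?n \<longrightarrow> f i \<in> pr i I \<and> (\<forall>J\<in>S. ix J = i \<longrightarrow> f i \<notin> pr i J)"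
      by blast
    have f: "\<And>i. i < ?n \<Longrightarrow> f i \<in> pr i I \<and> (\<forall>J\<in>S. ix J = i \<longrightarrow> f i \<notin> pr i J)"
      using f0 by blast
    define w where "w = map f [0..<?n]"
    have fc: "f i \<in> carrier (Rs ! i)" if i: "i < ?n" for i
    proof -
      obtain y where y: "y \<in> I" "f i = y ! i" using f[OF i] unfolding pr_def by blast
      show ?thesis using RDirProd_list_carrier_mem(2)[OF Ic[OF y(1)] i] y(2) by simp
    qed
    have wc: "w \<in> carrier ?P" unfolding w_def by (rule mk_carrier) (simp add: fc)
    have wi: "w ! i = f i" if "i < ?n" for i using that by (simp add: w_def)
    have "w \<in> I"
    proof (rule P_decomp[OF rings I wc])
      fix i assume i: "i < ?n"
      show "\<exists>y\<in>I. y ! i = w ! i" using f[OF i] wi[OF i] unfolding pr_def by force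
    qed
    then obtain J where J: "J \<in> S" "w \<in> J" using S(3) by blast
    have "ix J < ?n" using ixp[OF J(1)] by blast
    moreover have "w ! ix J \<in> pr (ix J) J" using J(2) unfolding pr_def by blast
    ultimately show False using f[of "ix J"] wi[of "ix J"] J(1) by simp
  qed
qed

theorem theorem3p7:
  fixes Rs :: "('a, 'b) ring_scheme list"
  assumes "Rs \<noteq> []"
    and "\<forall>R\<in>set Rs. cring R \<and> \<one>\<^bsub>R\<^esub> \<noteq> \<zero>\<^bsub>R\<^esub>"
  shows "avoidance_ring (RDirProd_list Rs) \<longleftrightarrow> (\<forall>R\<in>set Rs. avoidance_ring R)"
proof -
  have rings: "\<And>i. i < length Rs \<Longrightarrow> ring (Rs ! i)"
    using assms(2) nth_mem cring.axioms(1) by blast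
  show ?thesis
  proof
    assume "avoidance_ring (RDirProd_list Rs)"
    then show "\<forall>R\<in>set Rs. avoidance_ring R"
      using dir1[OF rings] by (metis in_set_conv_nth)
  next
    assume "\<forall>R\<in>set Rs. avoidance_ring R"
    then show "avoidance_ring (RDirProd_list Rs)"
      using dir2[OF rings] nth_mem by blast
  qed
qed

end
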